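(* Let $\mathscr{H}$ be a complex Hilbert space and $A\in\mathbb{B}(\mathscr{H})$. Then for every $\mu\in[0,2]$, $$w^2(A)\leq\frac{1}{4}\left\|\mu|A|^2+(2-\mu)|A^*|^2\right\|+\frac{1}{8}\left\||A|^2+|A^*|^2\right\|+\frac{1}{4}\,w(A^2).$$
   Context: $\mathbb{B}(\mathscr{H})$ denotes the algebra of bounded linear operators on $\mathscr{H}$; $\|\cdot\|$ is the operator norm. For $T\in\mathbb{B}(\mathscr{H})$, $|T|=(T^*T)^{1/2}$, and $w(T)=\sup\{|\langle Tx,x\rangle|: \|x\|=1\}$ is the numerical radius. *)

theory Defs
  imports "HOL-Analysis.Analysis"
begin

text \<open>A complex Hilbert space is a type of sort {cinner_space, complete_space}.
The complex inner product is linear in the first argument.\<close>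

class cinner_space = real_inner +
  fixes scaleC :: "complex \<Rightarrow> 'a \<Rightarrow> 'a"
  fixes cinner :: "'a \<Rightarrow> 'a \<Rightarrow> complex"
  assumes scaleC_add_right: "scaleC a (x + y) = scaleC a x + scaleC a y"
  and scaleC_add_left: "scaleC (a + b) x = scaleC a x + scaleC b x"
  and scaleC_scaleC: "scaleC a (scaleC b x) = scaleC (a * b) x"
  and scaleC_of_real: "scaleC (complex_of_real r) x = scaleR r x"
  and cinner_add_left: "cinner (x + y) z = cinner x z + cinner y z"
  and cinner_scaleC_left: "cinner (scaleC a x) y = a * cinner x y"
  and cinner_commute: "cinner y x = cnj (cinner x y)"
  and inner_cinner: "inner x y = Re (cinner x y)"

definition cbounded :: "('a::cinner_space \<Rightarrow> 'a) \<Rightarrow> bool" where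
  "cbounded T \<longleftrightarrow> bounded_linear T \<and> (\<forall>c x. T (scaleC c x) = scaleC c (T x))"

definition adj :: "('a::cinner_space \<Rightarrow> 'a) \<Rightarrow> ('a \<Rightarrow> 'a)" where
  "adj T = (THE S. \<forall>x y. cinner (T x) y = cinner x (S y))"

text \<open>Numerical radius (0 is inserted so that the trivial space gives 0).\<close>
definition nrad :: "('a::cinner_space \<Rightarrow> 'a) \<Rightarrow> real" where
  "nrad T = Sup (insert 0 {cmod (cinner (T x) x) | x. norm x = 1})"

end

theory Submission
  imports Defs
begin


lemma cinner_add_right: "cinner (x::'a::cinner_space) (y + z) = cinner x y + cinner x z"
  by (metis cinner_add_left cinner_commute complex_cnj_add)

lemma cinner_scaleC_right: "cinner (x::'a::cinner_space) (scaleC a y) = cnj a * cinner x y"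
  by (metis cinner_scaleC_left cinner_commute complex_cnj_mult complex_cnj_cnj)

lemma cinner_scaleR_left: "cinner (scaleR r (x::'a::cinner_space)) y = of_real r * cinner x y"
  by (metis cinner_scaleC_left scaleC_of_real)

lemma cinner_minus_left: "cinner (- (x::'a::cinner_space)) y = - cinner x y"
  using cinner_scaleR_left[of "-1" x y] by simp

lemma cinner_diff_left: "cinner ((x::'a::cinner_space) - z) y = cinner x y - cinner z y"
  using cinner_add_left[of x "-z" y] cinner_minus_left[of z y] by simp

lemma cinner_diff_right: "cinner (x::'a::cinner_space) (y - z) = cinner x y - cinner x z"
  by (metis cinner_diff_left cinner_commute complex_cnj_diff)

lemma cinner_self: "cinner (x::'a::cinner_space) x = complex_of_real ((norm x)^2)"
proof (rule complex_eqI)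
  show "Re (cinner x x) = Re (complex_of_real ((norm x)^2))"
    by (simp add: inner_cinner[symmetric] power2_norm_eq_inner)
  have "cinner x x = cnj (cinner x x)" by (rule cinner_commute)
  then have "Im (cinner x x) = 0" by (metis Reals_cnj_iff complex_is_Real_iff)
  then show "Im (cinner x x) = Im (complex_of_real ((norm x)^2))" by simp
qed

lemma norm_scaleC: "norm (scaleC a (x::'a::cinner_space)) = cmod a * norm x"
proof -
  have "(norm (scaleC a x))^2 = Re (cinner (scaleC a x) (scaleC a x))"
    by (simp add: inner_cinner[symmetric] power2_norm_eq_inner)
  also have "\<dots> = Re (cnj a * a * cinner x x)"
    by (simp only: cinner_scaleC_left cinner_scaleC_right mult.assoc)
  also have "\<dots> = Re (complex_of_real ((cmod a)^2 * (norm x)^2))"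
    by (simp only: cinner_self mult.commute[of "cnj a" a] complex_norm_square[symmetric] of_real_mult)
  also have "\<dots> = (cmod a * norm x)^2"
    by (simp add: power_mult_distrib)
  finally show ?thesis
    by (metis norm_ge_zero power2_eq_imp_eq mult_nonneg_nonneg)
qed

lemma cinner_CS: "cmod (cinner (x::'a::cinner_space) y) \<le> norm x * norm y"
proof (cases "cinner x y = 0")
  case True then show ?thesis by simp
next
  case False
  define c where "c = cinner x y"
  define w where "w = cnj c / of_real (cmod c)"
  have cm: "cmod w = 1" using False by (simp add: w_def c_def norm_divide)
  have cc: "cnj c * c = of_real ((cmod c)^2)" by (simp only: complex_norm_square mult.commute)
  have cn: "cmod c \<noteq> 0" using False by (simp add: c_def)
  have "w * c = (cnj c * c) / of_real (cmod c)" by (simp add: w_def)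
  also have "\<dots> = of_real ((cmod c)^2) / of_real (cmod c)" by (simp only: cc)
  also have "\<dots> = of_real (cmod c)" using cn by (simp add: power2_eq_square)
  finally have "w * c = of_real (cmod c)" .
  then have "cmod c = inner (scaleC w x) y"
    by (simp add: inner_cinner cinner_scaleC_left c_def)
  also have "\<dots> \<le> norm (scaleC w x) * norm y" by (rule norm_cauchy_schwarz)
  also have "\<dots> = norm x * norm y" by (simp add: norm_scaleC cm)
  finally show ?thesis by (simp add: c_def)
qed

lemma Im_cinner: "Im (cinner (x::'a::cinner_space) y) = - inner (scaleC \<i> x) y"
  by (simp add: inner_cinner cinner_scaleC_left)

lemma inner_ext: "(\<And>x. inner x u = inner x v) \<Longrightarrow> (u::'a::real_inner) = v"
proof -
  assume h: "\<And>x. inner x u = inner x v"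
  have "inner (u - v) (u - v) = 0" using h[of "u - v"] by (simp add: inner_diff_right)
  then show ?thesis by simp
qed



lemma parallelogram: "(norm (a - b))^2 + (norm (a + b))^2 = 2*(norm (a::'a::real_inner))^2 + 2*(norm b)^2"
  by (simp add: power2_norm_eq_inner inner_add_left inner_add_right inner_diff_left inner_diff_right inner_commute)

lemma riesz_real:
  fixes g :: "'a::{real_inner,complete_space} \<Rightarrow> real"
  assumes g: "bounded_linear g"
  shows "\<exists>z. \<forall>x. g x = inner x z"
proof (cases "\<forall>x. g x = 0")
  case True then show ?thesis by (intro exI[of _ 0]) simp
next
  case False
  interpret g: bounded_linear g by fact
  obtain w where gw: "g w \<noteq> 0" using False by auto
  define w1 where "w1 = (1 / g w) *\<^sub>R w"
  have gw1: "g w1 = 1" using gw by (simp add: w1_def g.scaleR)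
  define H where "H = {x. g x = 1}"
  define N where "N = (\<lambda>x::'a. (norm x)^2) ` H"
  define D where "D = Inf N"
  have ne: "N \<noteq> {}" using gw1 by (auto simp: H_def N_def)
  have bdd: "bdd_below N" by (auto simp: N_def intro: bdd_belowI[of _ 0])
  have Dle: "D \<le> (norm y)^2" if "y \<in> H" for y
    using cInf_lower[OF _ bdd] that by (auto simp: D_def N_def)
  have "\<exists>y\<in>H. (norm y)^2 < D + inverse (real (Suc n))" for n
  proof -
    have "D < D + inverse (real (Suc n))" by simp
    from cInf_lessD[OF ne, of "D + inverse (real (Suc n))"] this
    show ?thesis by (auto simp: D_def N_def)
  qed
  then have "\<forall>n. \<exists>y. y \<in> H \<and> (norm y)^2 < D + inverse (real (Suc n))" by blast
  from choice[OF this] obtain x where xx: "\<forall>n. x n \<in> H \<and> (norm (x n))^2 < D + inverse (real (Suc n))" ..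
  have xH: "\<And>n. x n \<in> H" and xn: "\<And>n. (norm (x n))^2 < D + inverse (real (Suc n))" using xx by auto
  have par: "(norm (x n - x m))^2 \<le> 2 * inverse (real (Suc n)) + 2 * inverse (real (Suc m))" for n m
  proof -
    have "(1/2) *\<^sub>R (x n + x m) \<in> H" using xH[of n] xH[of m]
      by (simp add: H_def g.scaleR g.add)
    hence "D \<le> (norm ((1/2) *\<^sub>R (x n + x m)))^2" by (rule Dle)
    hence "4*D \<le> (norm (x n + x m))^2" by (simp add: power2_eq_square)
    moreover note parallelogram[of "x n" "x m"] xn[of n] xn[of m]
    ultimately show ?thesis by linarith
  qed
  have "Cauchy x"
  proof (rule metric_CauchyI)
    fix e :: real assume e: "e > 0"
    obtain M :: nat where M: "4 / e^2 < real M" using reals_Archimedean2 by blast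
    show "\<exists>M. \<forall>m\<ge>M. \<forall>n\<ge>M. dist (x m) (x n) < e"
    proof (intro exI allI impI)
      fix m n assume mM: "M \<le> m" and nM: "M \<le> n"
      have "(norm (x m - x n))^2 \<le> 2 * inverse (real (Suc m)) + 2 * inverse (real (Suc n))" by (rule par)
      also have "\<dots> \<le> 4 * inverse (real (Suc M))"
      proof -
        have "inverse (real (Suc m)) \<le> inverse (real (Suc M))" using mM by (simp add: le_imp_inverse_le)
        moreover have "inverse (real (Suc n)) \<le> inverse (real (Suc M))" using nM by (simp add: le_imp_inverse_le)
        ultimately show ?thesis by linarith
      qed
      also have "\<dots> < e^2"
      proof -
        have "4 < e^2 * real M" using M e by (simp add: field_simps)
        moreover have "e^2 * real M \<le> e^2 * real (Suc M)" by (simp add: mult_left_mono)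
        ultimately have "4 < e^2 * real (Suc M)" by linarith
        then show ?thesis by (simp add: field_simps)
      qed
      finally have sq: "(norm (x m - x n))^2 < e^2" .
      have "norm (x m - x n) < e" using power_less_imp_less_base[OF sq less_imp_le[OF e]] .
      then show "dist (x m) (x n) < e" by (simp add: dist_norm)
    qed
  qed
  then obtain x0 where lim: "x \<longlonglongrightarrow> x0" using Cauchy_convergent_iff convergent_def by blast
  have c1: "(\<lambda>n. g (x n)) = (\<lambda>n. 1)" using xH by (simp add: H_def)
  have lim1: "(\<lambda>n. 1::real) \<longlonglongrightarrow> g x0" using g.tendsto[OF lim] unfolding c1 .
  then have gx0: "g x0 = 1" using lim1 by (simp add: LIMSEQ_const_iff)
  have "(\<lambda>n. (norm (x n))^2) \<longlonglongrightarrow> (norm x0)^2" using lim by (intro tendsto_intros)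
  moreover have "(\<lambda>n. D + inverse (real (Suc n))) \<longlonglongrightarrow> D + 0"
    by (intro tendsto_intros LIMSEQ_inverse_real_of_nat)
  ultimately have x0D: "(norm x0)^2 \<le> D"
    using LIMSEQ_le[of "\<lambda>n. (norm (x n))^2" _ "\<lambda>n. D + inverse (real (Suc n))"] xn
    by (simp add: less_imp_le)
  have orth: "inner x0 v = 0" if gv: "g v = 0" for v
  proof -
    define a where "a = inner x0 v"
    define b where "b = (norm v)^2"
    define t where "t = - a / (b + 1)"
    have b0: "b \<ge> 0" by (simp add: b_def)
    have inH: "x0 + t *\<^sub>R v \<in> H" using gx0 gv by (simp add: H_def g.add g.scaleR)
    have "(norm x0)^2 \<le> (norm (x0 + t *\<^sub>R v))^2" using order_trans[OF x0D Dle[OF inH]] .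
    also have "\<dots> = (norm x0)^2 + 2 * t * a + t^2 * b"
      unfolding power2_norm_eq_inner a_def b_def
      by (simp add: inner_add_left inner_add_right inner_commute power2_eq_square algebra_simps)
    finally have h0: "0 \<le> t * (2 * a + t * b)" by (simp add: algebra_simps power2_eq_square)
    have tb: "t * (b + 1) = - a" using b0 by (simp add: t_def)
    have "0 \<le> (b+1)^2 * (t * (2 * a + t * b))" using h0 by simp
    also have "\<dots> = (t*(b+1)) * (2*a*(b+1) + (t*(b+1))*b)"
      by (simp add: power2_eq_square algebra_simps)
    also have "\<dots> = - (a^2 * (b + 2))" unfolding tb by (simp add: power2_eq_square algebra_simps)
    finally have "0 \<le> - (a^2 * (b + 2))" .
    then have "a^2 * (b + 2) \<le> 0" by linarith
    moreover have "a^2 * (b+2) \<ge> 0" using b0 by simp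
    ultimately have "a^2 * (b + 2) = 0" by linarith
    then show ?thesis using b0 by (simp add: a_def)
  qed
  have x00: "x0 \<noteq> 0" using gx0 by auto
  define z where "z = (1 / (norm x0)^2) *\<^sub>R x0"
  show ?thesis
  proof (intro exI allI)
    fix y
    have "g (y - g y *\<^sub>R x0) = 0" using gx0 by (simp add: g.diff g.scaleR)
    then have "inner x0 (y - g y *\<^sub>R x0) = 0" by (rule orth)
    then have "inner x0 y = g y * (norm x0)^2" by (simp add: inner_diff_right power2_norm_eq_inner)
    then show "g y = inner y z" using x00 by (simp add: z_def inner_commute field_simps)
  qed
qed



lemma adj_exists:
  fixes A :: "'a::{cinner_space,complete_space} \<Rightarrow> 'a"
  assumes "cbounded A"
  shows "\<exists>S. \<forall>x y. cinner (A x) y = cinner x (S y)"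
proof -
  have bA: "bounded_linear A" and sA: "\<And>c x. A (scaleC c x) = scaleC c (A x)"
    using assms by (auto simp: cbounded_def)
  have "\<forall>y. \<exists>z. \<forall>x. cinner (A x) y = cinner x z"
  proof
    fix y
    have "bounded_linear (\<lambda>x. inner (A x) y)"
      using bounded_linear_compose[OF bounded_linear_inner_left bA] .
    from riesz_real[OF this] obtain z where z: "\<And>x. inner (A x) y = inner x z" by blast
    show "\<exists>z. \<forall>x. cinner (A x) y = cinner x z"
    proof (intro exI allI)
      fix x
      show "cinner (A x) y = cinner x z"
      proof (rule complex_eqI)
        show "Re (cinner (A x) y) = Re (cinner x z)"
          using z[of x] by (simp add: inner_cinner)
        show "Im (cinner (A x) y) = Im (cinner x z)"
          using z[of "scaleC \<i> x"] by (simp add: Im_cinner sA)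
      qed
    qed
  qed
  from choice[OF this] show ?thesis by blast
qed

lemma adj_char:
  fixes A :: "'a::{cinner_space,complete_space} \<Rightarrow> 'a"
  assumes "cbounded A"
  shows "cinner (A x) y = cinner x (adj A y)"
proof -
  obtain S where S: "\<forall>x y. cinner (A x) y = cinner x (S y)" using adj_exists[OF assms] by blast
  have "adj A = S" unfolding adj_def
  proof (rule the_equality)
    show "\<forall>x y. cinner (A x) y = cinner x (S y)" by (rule S)
    fix S' assume S': "\<forall>x y. cinner (A x) y = cinner x (S' y)"
    show "S' = S"
    proof (rule ext, rule inner_ext)
      fix y x
      show "inner x (S' y) = inner x (S y)" using S S' by (simp add: inner_cinner)
    qed
  qed
  then show ?thesis using S by simp
qed

lemma adj_inner:
  fixes A :: "'a::{cinner_space,complete_space} \<Rightarrow> 'a"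
  assumes "cbounded A"
  shows "inner (A x) y = inner x (adj A y)"
  using adj_char[OF assms] by (simp add: inner_cinner)

lemma adj_bl:
  fixes A :: "'a::{cinner_space,complete_space} \<Rightarrow> 'a"
  assumes "cbounded A"
  shows "bounded_linear (adj A)"
proof -
  have bA: "bounded_linear A" using assms by (auto simp: cbounded_def)
  note I = adj_inner[OF assms]
  show ?thesis
  proof (rule bounded_linear_intro[where K = "onorm A"])
    fix y z
    show "adj A (y + z) = adj A y + adj A z"
      by (rule inner_ext) (simp add: I[symmetric] inner_add_right)
  next
    fix r y
    show "adj A (r *\<^sub>R y) = r *\<^sub>R adj A y"
      by (rule inner_ext) (simp add: I[symmetric] inner_scaleR_right)
  next
    fix y
    show "norm (adj A y) \<le> norm y * onorm A"
    proof (cases "adj A y = 0")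
      case True then show ?thesis using onorm_pos_le[OF bA] by simp
    next
      case False
      have "norm (adj A y) * norm (adj A y) = inner (A (adj A y)) y"
        by (simp add: I power2_norm_eq_inner[symmetric] power2_eq_square)
      also have "\<dots> \<le> norm (A (adj A y)) * norm y" by (rule norm_cauchy_schwarz)
      also have "\<dots> \<le> (onorm A * norm (adj A y)) * norm y"
        by (rule mult_right_mono[OF onorm[OF bA]]) simp
      finally have "norm (adj A y) * norm (adj A y) \<le> norm (adj A y) * (norm y * onorm A)"
        by (simp add: algebra_simps)
      then show ?thesis using False by simp
    qed
  qed
qed



theorem mainTheorem4:
  fixes A :: "'a::{cinner_space, complete_space} \<Rightarrow> 'a" and \<mu> :: real
  assumes "cbounded A" and "0 \<le> \<mu>" and "\<mu> \<le> 2"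
  shows "(nrad A)^2 \<le>
      1/4 * onorm (\<lambda>x. \<mu> *\<^sub>R adj A (A x) + (2 - \<mu>) *\<^sub>R A (adj A x))
    + 1/8 * onorm (\<lambda>x. adj A (A x) + A (adj A x))
    + 1/4 * nrad (A \<circ> A)"
proof -
  note cb = assms(1)
  define S where "S = adj A"
  have bA: "bounded_linear A" and sA: "\<And>c x. A (scaleC c x) = scaleC c (A x)"
    using cb by (auto simp: cbounded_def)
  have bS: "bounded_linear S" unfolding S_def by (rule adj_bl[OF cb])
  have CI: "\<And>x y. cinner (A x) y = cinner x (S y)" unfolding S_def by (rule adj_char[OF cb])
  have RI: "\<And>x y. inner (A x) y = inner x (S y)" unfolding S_def by (rule adj_inner[OF cb])
  define T1 where "T1 = (\<lambda>x. \<mu> *\<^sub>R S (A x) + (2 - \<mu>) *\<^sub>R A (S x))"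
  define T2 where "T2 = (\<lambda>x. S (A x) + A (S x))"
  have bSA: "bounded_linear (\<lambda>x. S (A x))" by (rule bounded_linear_compose[OF bS bA])
  have bAS: "bounded_linear (\<lambda>x. A (S x))" by (rule bounded_linear_compose[OF bA bS])
  have bT1: "bounded_linear T1" unfolding T1_def
    by (intro bounded_linear_add bounded_linear_const_scaleR bSA bAS)
  have bT2: "bounded_linear T2" unfolding T2_def by (rule bounded_linear_add[OF bSA bAS])
  have bAA: "bounded_linear (A \<circ> A)" unfolding comp_def by (rule bounded_linear_compose[OF bA bA])
  define Q2 where "Q2 = insert 0 {cmod (cinner ((A \<circ> A) x) x) | x. norm x = 1}"
  have bddQ2: "bdd_above Q2"
  proof (rule bdd_aboveI[where M = "onorm (A \<circ> A)"])
    fix q assume "q \<in> Q2"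
    then consider "q = 0" | x where "norm x = 1" "q = cmod (cinner ((A \<circ> A) x) x)"
      unfolding Q2_def by blast
    then show "q \<le> onorm (A \<circ> A)"
    proof cases
      case 1 then show ?thesis using onorm_pos_le[OF bAA] by simp
    next
      case 2
      have "q \<le> norm ((A \<circ> A) x) * norm x" using 2 cinner_CS[of "(A \<circ> A) x" x] by simp
      also have "\<dots> \<le> onorm (A \<circ> A) * norm x * norm x"
        by (rule mult_right_mono[OF onorm[OF bAA]]) simp
      finally show ?thesis using 2 by simp
    qed
  qed
  have nAA0: "0 \<le> nrad (A \<circ> A)" unfolding nrad_def Q2_def[symmetric]
    by (rule cSup_upper[OF _ bddQ2]) (simp add: Q2_def)
  have dle: "cmod (cinner (A (A x)) x) \<le> nrad (A \<circ> A)" if "norm x = 1" for x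
    unfolding nrad_def Q2_def[symmetric]
    by (rule cSup_upper[OF _ bddQ2]) (use that in \<open>auto simp: Q2_def\<close>)
  define R where "R = 1/4 * onorm T1 + 1/8 * onorm T2 + 1/4 * nrad (A \<circ> A)"
  have R0: "0 \<le> R" unfolding R_def using onorm_pos_le[OF bT1] onorm_pos_le[OF bT2] nAA0 by simp
  have key: "(cmod (cinner (A x) x))^2 \<le> R" if x1: "norm x = 1" for x
  proof -
    define c where "c = cinner (A x) x"
    define a where "a = norm (A x)"
    define b where "b = norm (S x)"
    define e where "e = cinner (A (A x)) x"
    define p where "p = cmod c"
    have cS: "cinner x (S x) = c" unfolding c_def by (simp add: CI)
    have c1: "p \<le> a" using cinner_CS[of "A x" x] x1 by (simp add: p_def c_def a_def)
    have c2: "p \<le> b" using cinner_CS[of x "S x"] x1 cS by (simp add: p_def b_def)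
    have p0: "0 \<le> p" by (simp add: p_def)
    define u where "u = scaleC (2 * c) x - A x"
    have xx: "cinner x x = 1" using x1 by (simp add: cinner_self)
    have xAx: "cinner x (A x) = cnj c" unfolding c_def by (rule cinner_commute)
    have AxAx: "cinner (A x) (A x) = of_real (a^2)" unfolding a_def by (rule cinner_self)
    have "cinner u u = cnj (2 * c) * (2 * c * cinner x x - cinner (A x) x) -
        (2 * c * cinner x (A x) - cinner (A x) (A x))"
      unfolding u_def by (simp only: cinner_diff_left cinner_diff_right cinner_scaleC_left cinner_scaleC_right)
    also have "\<dots> = of_real (a^2)" unfolding xx xAx AxAx c_def[symmetric]
      by (simp add: algebra_simps)
    finally have uu: "cinner u u = of_real (a^2)" .
    have "(norm u)^2 = a^2" using uu by (simp add: power2_norm_eq_inner inner_cinner)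
    then have nu: "norm u = a" by (rule power2_eq_imp_eq) (simp_all add: a_def)
    have e1: "cinner (A x) (S x) = e" unfolding e_def by (simp add: CI)
    have cu: "cinner u (S x) = 2 * c * c - e"
      unfolding u_def by (simp add: cinner_diff_left cinner_scaleC_left cS e1)
    have "cmod (2 * c * c - e) \<le> a * b" using cinner_CS[of u "S x"] cu nu by (simp add: b_def)
    moreover have "cmod (2 * c * c) \<le> cmod (2 * c * c - e) + cmod e"
      using norm_triangle_ineq[of "2 * c * c - e" e] by simp
    moreover have "cmod (2 * c * c) = 2 * p^2" by (simp add: p_def norm_mult power2_eq_square)
    ultimately have c3: "2 * p^2 \<le> a * b + cmod e" by linarith
    have ab: "a * b \<le> (a^2 + b^2) / 2"
      using sum_squares_ge_zero[of "a - b" 0] by (simp add: power2_eq_square algebra_simps)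
    have "\<mu> * p^2 \<le> \<mu> * a^2" using c1 p0 assms(2) by (intro mult_left_mono power_mono) auto
    moreover have "(2 - \<mu>) * p^2 \<le> (2 - \<mu>) * b^2" using c2 p0 assms(3) by (intro mult_left_mono power_mono) auto
    ultimately have "\<mu> * p^2 + (2 - \<mu>) * p^2 \<le> \<mu> * a^2 + (2 - \<mu>) * b^2" by (rule add_mono)
    moreover have "\<mu> * p^2 + (2 - \<mu>) * p^2 = 2 * p^2" by (simp add: algebra_simps)
    ultimately have c4: "2 * p^2 \<le> \<mu> * a^2 + (2 - \<mu>) * b^2" by linarith
    have iSA: "inner (S (A x)) x = a^2"
      by (simp add: inner_commute RI[symmetric] a_def power2_norm_eq_inner)
    have iAS: "inner (A (S x)) x = b^2"
      by (simp add: RI b_def power2_norm_eq_inner)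
    have "inner (T1 x) x = \<mu> * a^2 + (2 - \<mu>) * b^2"
      by (simp add: T1_def inner_add_left iSA iAS)
    also have "inner (T1 x) x \<le> onorm T1"
    proof -
      have "inner (T1 x) x \<le> norm (T1 x) * norm x" by (rule norm_cauchy_schwarz)
      also have "\<dots> \<le> onorm T1" using onorm[OF bT1, of x] x1 by simp
      finally show ?thesis .
    qed
    ultimately have t1: "\<mu> * a^2 + (2 - \<mu>) * b^2 \<le> onorm T1" by simp
    have "inner (T2 x) x = a^2 + b^2"
      by (simp add: T2_def inner_add_left iSA iAS)
    also have "inner (T2 x) x \<le> onorm T2"
    proof -
      have "inner (T2 x) x \<le> norm (T2 x) * norm x" by (rule norm_cauchy_schwarz)
      also have "\<dots> \<le> onorm T2" using onorm[OF bT2, of x] x1 by simp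
      finally show ?thesis .
    qed
    ultimately have t2: "a^2 + b^2 \<le> onorm T2" by simp
    have t3: "cmod e \<le> nrad (A \<circ> A)" unfolding e_def by (rule dle[OF x1])
    have gen: "\<And>P W E Y X O1 O2 N::real. 2*P \<le> W + E \<Longrightarrow> W \<le> Y/2 \<Longrightarrow> 2*P \<le> X
        \<Longrightarrow> X \<le> O1 \<Longrightarrow> Y \<le> O2 \<Longrightarrow> E \<le> N \<Longrightarrow> P \<le> 1/4*O1 + 1/8*O2 + 1/4*N"
      by linarith
    have "p^2 \<le> R" unfolding R_def by (rule gen[OF c3 ab c4 t1 t2 t3])
    then show ?thesis by (simp add: p_def c_def)
  qed
  define Q1 where "Q1 = insert 0 {cmod (cinner (A x) x) | x. norm x = 1}"
  have Qle: "q \<le> sqrt R" if "q \<in> Q1" for q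
  proof -
    from that consider "q = 0" | x where "norm x = 1" "q = cmod (cinner (A x) x)"
      unfolding Q1_def by blast
    then show ?thesis
    proof cases
      case 1 then show ?thesis using R0 by simp
    next
      case 2 then show ?thesis using key[OF 2(1)] by (simp add: real_le_rsqrt)
    qed
  qed
  have bddQ1: "bdd_above Q1" using Qle by (rule bdd_aboveI)
  have n0: "0 \<le> nrad A" unfolding nrad_def Q1_def[symmetric]
    by (rule cSup_upper[OF _ bddQ1]) (simp add: Q1_def)
  have n1: "nrad A \<le> sqrt R" unfolding nrad_def Q1_def[symmetric]
    by (rule cSup_least) (auto simp: Q1_def[symmetric] Qle, simp add: Q1_def)
  have "(nrad A)^2 \<le> (sqrt R)^2" by (rule power_mono[OF n1 n0])
  also have "\<dots> = R" using R0 by simp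
  finally show ?thesis unfolding R_def T1_def T2_def S_def .
qed

end
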